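(* Let $M=(E,\Delta)$ be a matroid of rank $r$ that is realizable over some field, and let $(f_0,f_1,\ldots,f_r)$ be the $f$-vector of its matroid complex $\Delta$. Then the $f$-vector is strictly log-concave, i.e. $$f_i^2 > f_{i-1}f_{i+1}\qquad\text{for } i=1,\ldots,r-1.$$
   Context: A matroid $M=(E,\Delta)$ has finite ground set $E$ and matroid complex $\Delta\subseteq 2^E$, the simplicial complex of independent sets. The rank $r$ of $M$ is the maximal cardinality of an independent set. The $f$-vector $(f_0,\ldots,f_r)$ is defined by $f_i=\#\{A\in\Delta : |A|=i\}$. A matroid is realizable over a field $\mathbb{K}$ if there is a list of vectors in some $\mathbb{K}^n$, indexed by $E$, whose linearly independent sublists are exactly the sets in $\Delta$. *)

theory Defs
  imports Main
begin

definition matroid :: "'e set \<Rightarrow> 'e set set \<Rightarrow> bool" where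
  "matroid E Delta \<longleftrightarrow>
     finite E \<and> Delta \<subseteq> Pow E \<and> {} \<in> Delta \<and>
     (\<forall>A B. B \<in> Delta \<and> A \<subseteq> B \<longrightarrow> A \<in> Delta) \<and>
     (\<forall>A B. A \<in> Delta \<and> B \<in> Delta \<and> card A < card B \<longrightarrow>
        (\<exists>x \<in> B - A. insert x A \<in> Delta))"

definition matroid_rank :: "'e set set \<Rightarrow> nat" where
  "matroid_rank Delta = Max (card ` Delta)"

definition fvec :: "'e set set \<Rightarrow> nat \<Rightarrow> nat" where
  "fvec Delta i = card {A \<in> Delta. card A = i}"

text \<open>Vectors of K^n are represented as functions nat => K, only coordinates < n matter.\<close>
definition lin_indep_family :: "nat \<Rightarrow> ('e \<Rightarrow> nat \<Rightarrow> 'k::field) \<Rightarrow> 'e set \<Rightarrow> bool" where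
  "lin_indep_family n v A \<longleftrightarrow>
     (\<forall>c :: 'e \<Rightarrow> 'k. (\<forall>j<n. (\<Sum>a\<in>A. c a * v a j) = 0) \<longrightarrow> (\<forall>a\<in>A. c a = 0))"

definition realizable_over :: "('k::field) itself \<Rightarrow> 'e set \<Rightarrow> 'e set set \<Rightarrow> bool" where
  "realizable_over _ E Delta \<longleftrightarrow>
     (\<exists>n (v :: 'e \<Rightarrow> nat \<Rightarrow> 'k). \<forall>A. A \<subseteq> E \<longrightarrow> (A \<in> Delta \<longleftrightarrow> lin_indep_family n v A))"

end

theory Submission
  imports Defs "Jordan_Normal_Form.Determinant"
begin

lemma inj_imp_surj_fin:
  fixes K :: "'a \<Rightarrow> 'a \<Rightarrow> real"
  assumes fin: "finite N"
    and inj: "\<And>w. (\<forall>a\<in>N. (\<Sum>b\<in>N. K a b * w b) = 0) \<Longrightarrow> (\<forall>a\<in>N. w a = 0)"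
  shows "\<exists>w. \<forall>a\<in>N. (\<Sum>b\<in>N. K a b * w b) = r a"
proof -
  define n where "n = card N"
  obtain g where g: "bij_betw g {0..<n} N" using ex_bij_betw_nat_finite[OF fin] n_def by blast
  define gi where "gi = inv_into {0..<n} g"
  have gi1: "\<And>b. b \<in> N \<Longrightarrow> gi b < n \<and> g (gi b) = b"
    using g unfolding gi_def bij_betw_def
    by (metis atLeastLessThan_iff f_inv_into_f inv_into_into)
  have gi2: "\<And>j. j < n \<Longrightarrow> gi (g j) = j"
    using g unfolding gi_def bij_betw_def by (simp add: inv_into_f_f)
  have gN: "\<And>j. j < n \<Longrightarrow> g j \<in> N" using g unfolding bij_betw_def by auto
  define A :: "real mat" where "A = mat n n (\<lambda>(i,j). K (g i) (g j))"
  have A: "A \<in> carrier_mat n n" unfolding A_def by simp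
  have reidx: "(A *\<^sub>v v) $ i = (\<Sum>b\<in>N. K (g i) b * (\<lambda>b. v $ gi b) b)"
    if i: "i < n" and dv: "dim_vec v = n" for i v
  proof -
    have "(A *\<^sub>v v) $ i = (\<Sum>j\<in>{0..<n}. K (g i) (g j) * v $ j)"
      using i dv unfolding A_def by (simp add: scalar_prod_def row_def)
    also have "\<dots> = (\<Sum>j\<in>{0..<n}. K (g i) (g j) * v $ gi (g j))"
      by (rule sum.cong) (auto simp: gi2)
    also have "\<dots> = (\<Sum>b\<in>N. K (g i) b * v $ gi b)"
      using sum.reindex_bij_betw[OF g, of "\<lambda>b. K (g i) b * v $ gi b"] by simp
    finally show ?thesis by simp
  qed
  have det: "det A \<noteq> 0"
  proof
    assume "det A = 0"
    then obtain v where v: "v \<in> carrier_vec n" "v \<noteq> 0\<^sub>v n" "A *\<^sub>v v = 0\<^sub>v n"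
      using det_0_iff_vec_prod_zero_field[OF A] by blast
    have dv: "dim_vec v = n" using v(1) by simp
    have "\<forall>a\<in>N. (\<Sum>b\<in>N. K a b * (\<lambda>b. v $ gi b) b) = 0"
    proof
      fix a assume a: "a \<in> N"
      have "(A *\<^sub>v v) $ gi a = 0" using v(3) gi1[OF a] by simp
      then show "(\<Sum>b\<in>N. K a b * (\<lambda>b. v $ gi b) b) = 0"
        using reidx[of "gi a" v] dv gi1[OF a] by simp
    qed
    from inj[OF this] have "\<And>j. j < n \<Longrightarrow> v $ j = 0"
      using gN gi2 by force
    then have "v = 0\<^sub>v n" using dv by (intro eq_vecI) auto
    with v(2) show False by simp
  qed
  from det_non_zero_imp_unit[OF A det, of "()"]
  obtain B where B: "B \<in> carrier_mat n n" "A * B = 1\<^sub>m n"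
    unfolding Units_def ring_mat_def by auto
  define rv where "rv = vec n (\<lambda>i. r (g i))"
  define v where "v = B *\<^sub>v rv"
  have dv: "dim_vec v = n" using B unfolding v_def rv_def by simp
  have Av: "A *\<^sub>v v = rv" unfolding v_def
  proof -
    have rvc: "rv \<in> carrier_vec n" unfolding rv_def by simp
    have "A *\<^sub>v (B *\<^sub>v rv) = (A * B) *\<^sub>v rv"
      using assoc_mult_mat_vec[OF A B(1) rvc] by simp
    also have "\<dots> = rv" using B(2) rvc by simp
    finally show "A *\<^sub>v (B *\<^sub>v rv) = rv" .
  qed
  show ?thesis
  proof (intro exI ballI)
    fix a assume a: "a \<in> N"
    have "(A *\<^sub>v v) $ gi a = r a" using Av gi1[OF a] unfolding rv_def by simp
    then show "(\<Sum>b\<in>N. K a b * (\<lambda>b. v $ gi b) b) = r a"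
      using reidx[of "gi a" v] dv gi1[OF a] by simp
  qed
qed

definition qf :: "'a set \<Rightarrow> ('a \<Rightarrow> 'a \<Rightarrow> real) \<Rightarrow> ('a \<Rightarrow> real) \<Rightarrow> ('a \<Rightarrow> real) \<Rightarrow> real" where
  "qf N H u v = (\<Sum>a\<in>N. \<Sum>b\<in>N. u a * H a b * v b)"

definition lorz :: "'a set \<Rightarrow> ('a \<Rightarrow> 'a \<Rightarrow> real) \<Rightarrow> bool" where
  "lorz N H \<longleftrightarrow> (\<forall>z w. 0 < qf N H z z \<longrightarrow> qf N H z z * qf N H w w \<le> (qf N H z w)^2)"

lemma qf_lin_left:
  "qf N H (\<lambda>a. \<alpha> * u a + \<beta> * v a) w = \<alpha> * qf N H u w + \<beta> * qf N H v w"
  unfolding qf_def by (simp add: algebra_simps sum.distrib sum_distrib_left)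

lemma qf_lin_right:
  "qf N H w (\<lambda>a. \<alpha> * u a + \<beta> * v a) = \<alpha> * qf N H w u + \<beta> * qf N H w v"
  unfolding qf_def by (simp add: algebra_simps sum.distrib sum_distrib_left)

lemma qf_sym:
  assumes "\<forall>a\<in>N. \<forall>b\<in>N. H a b = H b a"
  shows "qf N H u v = qf N H v u"
proof -
  have "qf N H u v = (\<Sum>b\<in>N. \<Sum>a\<in>N. u a * H a b * v b)"
    unfolding qf_def by (rule sum.swap)
  also have "\<dots> = qf N H v u" unfolding qf_def
    using assms by (intro sum.cong refl) (auto simp: mult_ac)
  finally show ?thesis .
qed

lemma lorz_from_hyperplane:
  assumes symH: "\<forall>a\<in>N. \<forall>b\<in>N. H a b = H b a" and pos: "0 < qf N H x x"
    and hyp: "\<forall>z. qf N H x z = 0 \<longrightarrow> qf N H z z \<le> 0"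
  shows "lorz N H"
  unfolding lorz_def
proof (intro allI impI)
  fix z w assume zz: "0 < qf N H z z"
  note sy = qf_sym[OF symH]
  have xz: "qf N H x z \<noteq> 0" using hyp zz by force
  have step1: "qf N H u u \<le> 0" if zu: "qf N H z u = 0" for u
  proof (rule ccontr)
    assume "\<not> qf N H u u \<le> 0"
    then have uu: "qf N H u u > 0" by simp
    define v where "v = (\<lambda>a. qf N H x u * z a + (- qf N H x z) * u a)"
    have "qf N H x v = 0" unfolding v_def qf_lin_right by simp
    then have vv: "qf N H v v \<le> 0" using hyp by blast
    have uz: "qf N H u z = 0" using zu sy by metis
    have "qf N H v v = (qf N H x u)^2 * qf N H z z + (qf N H x z)^2 * qf N H u u"
      unfolding v_def qf_lin_right qf_lin_left using zu uz by (simp add: power2_eq_square algebra_simps)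
    moreover have "(qf N H x u)^2 * qf N H z z \<ge> 0" using zz by simp
    moreover have "(qf N H x z)^2 * qf N H u u > 0" using xz uu by simp
    ultimately show False using vv by linarith
  qed
  define c where "c = qf N H z w / qf N H z z"
  define u where "u = (\<lambda>a. 1 * w a + (- c) * z a)"
  have "qf N H z u = qf N H z w - c * qf N H z z" unfolding u_def qf_lin_right by simp
  also have "\<dots> = 0" unfolding c_def using zz by simp
  finally have "qf N H u u \<le> 0" using step1 by blast
  moreover have "qf N H u u = qf N H w w - 2 * c * qf N H z w + c^2 * qf N H z z"
    unfolding u_def qf_lin_right qf_lin_left using sy[of z w]
    by (simp add: power2_eq_square algebra_simps)
  moreover have "c^2 * qf N H z z = c * qf N H z w" unfolding c_def using zz
    by (simp add: power2_eq_square field_simps)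
  ultimately have "qf N H w w \<le> c * qf N H z w" by linarith
  then have "qf N H w w * qf N H z z \<le> c * qf N H z w * qf N H z z"
    using zz by (simp add: mult_right_mono)
  also have "\<dots> = (qf N H z w)^2" unfolding c_def using zz by (simp add: power2_eq_square field_simps)
  finally show "qf N H z z * qf N H w w \<le> (qf N H z w)^2" by (simp add: mult_ac)
qed

lemma cs_disc:
  fixes A B C :: real
  assumes "\<forall>t. 0 \<le> A + 2 * t * B + t^2 * C" and Cnn: "0 \<le> C"
  shows "B^2 \<le> A * C"
proof (cases "C = 0")
  case True
  show ?thesis
  proof (cases "B = 0")
    case True then show ?thesis using assms(1)[rule_format, of 0] \<open>C = 0\<close> by simp
  next
    case False
    have "0 \<le> A + 2 * (-(A+1)/(2*B)) * B" using assms(1)[rule_format, of "-(A+1)/(2*B)"] True by simp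
    also have "\<dots> = -1" using False by (simp add: field_simps)
    finally show ?thesis by simp
  qed
next
  case False
  have C: "C > 0" using False Cnn by simp
  have "0 \<le> A + 2 * (-B/C) * B + (-B/C)^2 * C" using assms(1) by blast
  also have "\<dots> = A - B^2 / C" using C by (simp add: power2_eq_square field_simps)
  finally show ?thesis using C by (simp add: field_simps)
qed

lemma partA:
  fixes H :: "'a \<Rightarrow> 'a \<Rightarrow> real" and p :: "'a \<Rightarrow> real"
  assumes fin: "finite N" and yN: "y \<in> N"
    and symH: "\<forall>a\<in>N. \<forall>b\<in>N. H a b = H b a"
    and nn: "\<forall>a\<in>N. \<forall>b\<in>N. 0 \<le> H a b"
    and pp: "\<forall>a\<in>N. 0 < p a"
    and hp: "\<forall>a\<in>N. 0 < (\<Sum>b\<in>N. H a b * p b)"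
    and conn: "\<forall>a\<in>N. 0 < H y a"
    and TD: "\<forall>z. qf N H z z \<le> (\<Sum>a\<in>N. p a * (\<Sum>b\<in>N. H a b * z b)^2 / (\<Sum>b\<in>N. H a b * p b))"
  shows "\<forall>z. qf N H p z = 0 \<longrightarrow> qf N H z z \<le> 0"
proof -
  define h where "h a = (\<Sum>b\<in>N. H a b * p b)" for a
  define d where "d a = h a / p a" for a
  define hz where "hz z a = (\<Sum>b\<in>N. H a b * z b)" for z a
  define nr where "nr u v = (\<Sum>a\<in>N. d a * u a * v a)" for u v
  define be where "be u v = nr u v - qf N H u v" for u v
  note sy = qf_sym[OF symH]
  have dpos: "\<And>a. a \<in> N \<Longrightarrow> d a > 0" unfolding d_def h_def using hp pp by simp
  have qf_hz: "qf N H u v = (\<Sum>a\<in>N. u a * hz v a)" for u v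
    unfolding qf_def hz_def by (simp add: sum_distrib_left mult.assoc)
  have qf_h: "qf N H u p = (\<Sum>a\<in>N. u a * h a)" for u
    unfolding qf_hz hz_def h_def ..
  have sp: "(\<Sum>a\<in>N. p a * p a) > 0"
    using yN pp fin by (intro sum_pos2[of N y]) auto
  have e2: "(\<Sum>a\<in>N. \<Sum>b\<in>N. H a b * p b * (w a)^2 / p a) = nr w w" for w
  proof -
    have "(\<Sum>a\<in>N. \<Sum>b\<in>N. H a b * p b * (w a)^2 / p a) = (\<Sum>a\<in>N. h a * (w a)^2 / p a)"
      unfolding h_def by (simp add: sum_divide_distrib sum_distrib_right)
    also have "\<dots> = nr w w" unfolding nr_def d_def by (simp add: power2_eq_square mult.assoc)
    finally show ?thesis .
  qed
  have e3: "(\<Sum>a\<in>N. \<Sum>b\<in>N. H a b * p a * (w b)^2 / p b) = nr w w" for w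
  proof -
    have "(\<Sum>a\<in>N. \<Sum>b\<in>N. H a b * p a * (w b)^2 / p b) = (\<Sum>b\<in>N. \<Sum>a\<in>N. H a b * p a * (w b)^2 / p b)"
      by (rule sum.swap)
    also have "\<dots> = (\<Sum>b\<in>N. \<Sum>a\<in>N. H b a * p a * (w b)^2 / p b)"
      using symH by (intro sum.cong refl) auto
    finally show ?thesis using e2 by simp
  qed
  have lap: "be w w = (\<Sum>a\<in>N. \<Sum>b\<in>N. H a b * p a * p b * (w a / p a - w b / p b)^2) / 2" for w
  proof -
    have "(\<Sum>a\<in>N. \<Sum>b\<in>N. H a b * p a * p b * (w a / p a - w b / p b)^2)
       = (\<Sum>a\<in>N. \<Sum>b\<in>N. H a b * p b * (w a)^2 / p a + H a b * p a * (w b)^2 / p b - 2 * (w a * H a b * w b))"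
      using pp by (intro sum.cong refl) (auto simp: power2_eq_square field_simps)
    also have "\<dots> = (\<Sum>a\<in>N. \<Sum>b\<in>N. H a b * p b * (w a)^2 / p a) + (\<Sum>a\<in>N. \<Sum>b\<in>N. H a b * p a * (w b)^2 / p b)
         - 2 * qf N H w w"
      unfolding qf_def by (simp add: sum.distrib sum_subtractf sum_distrib_left)
    finally show ?thesis unfolding e2 e3 be_def by simp
  qed
  have psd: "be w w \<ge> 0" for w
    unfolding lap using nn pp by (intro divide_nonneg_pos sum_nonneg) (auto intro!: mult_nonneg_nonneg simp: less_imp_le)
  have nr_sym: "nr u v = nr v u" for u v unfolding nr_def by (simp add: mult_ac)
  have be_sym: "be u v = be v u" for u v unfolding be_def using nr_sym sy by metis
  have nr_l: "nr (\<lambda>a. \<alpha> * u a + \<beta> * v a) w = \<alpha> * nr u w + \<beta> * nr v w" for \<alpha> \<beta> u v w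
    unfolding nr_def by (simp add: algebra_simps sum.distrib sum_distrib_left)
  have nr_r: "nr w (\<lambda>a. \<alpha> * u a + \<beta> * v a) = \<alpha> * nr w u + \<beta> * nr w v" for \<alpha> \<beta> u v w
    unfolding nr_def by (simp add: algebra_simps sum.distrib sum_distrib_left)
  have be_l: "be (\<lambda>a. \<alpha> * u a + \<beta> * v a) w = \<alpha> * be u w + \<beta> * be v w" for \<alpha> \<beta> u v w
    unfolding be_def nr_l qf_lin_left by (simp add: algebra_simps)
  have be_r: "be w (\<lambda>a. \<alpha> * u a + \<beta> * v a) = \<alpha> * be w u + \<beta> * be w v" for \<alpha> \<beta> u v w
    unfolding be_def nr_r qf_lin_right by (simp add: algebra_simps)
  have cs: "(be u v)^2 \<le> be u u * be v v" for u v
  proof (rule cs_disc)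
    show "0 \<le> be v v" by (rule psd)
    show "\<forall>t. 0 \<le> be u u + 2 * t * be u v + t^2 * be v v"
    proof
      fix t
      have "be (\<lambda>a. 1 * u a + t * v a) (\<lambda>a. 1 * u a + t * v a) = be u u + 2 * t * be u v + t^2 * be v v"
        unfolding be_l be_r using be_sym[of v u] by (simp add: power2_eq_square algebra_simps)
      then show "0 \<le> be u u + 2 * t * be u v + t^2 * be v v" using psd by metis
    qed
  qed
  have ker: "\<forall>a\<in>N. w a = (w y / p y) * p a" if "be w w = 0" for w
  proof
    fix a assume a: "a \<in> N"
    have s0: "(\<Sum>a\<in>N. \<Sum>b\<in>N. H a b * p a * p b * (w a / p a - w b / p b)^2) = 0"
      using that lap by simp
    have tnn: "\<forall>a\<in>N. \<forall>b\<in>N. 0 \<le> H a b * p a * p b * (w a / p a - w b / p b)^2"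
      using nn pp by (auto intro!: mult_nonneg_nonneg simp: less_imp_le)
    have inn: "\<forall>a\<in>N. (\<Sum>b\<in>N. H a b * p a * p b * (w a / p a - w b / p b)^2) = 0"
      using s0 fin tnn by (subst (asm) sum_nonneg_eq_0_iff) (auto intro!: sum_nonneg)
    then have "(\<Sum>b\<in>N. H y b * p y * p b * (w y / p y - w b / p b)^2) = 0" using yN by blast
    then have "H y a * p y * p a * (w y / p y - w a / p a)^2 = 0"
      using fin tnn a yN by (subst (asm) sum_nonneg_eq_0_iff) auto
    then have "w y / p y = w a / p a" using conn a pp yN by auto
    moreover have "p a \<noteq> 0" using pp a by force
    ultimately show "w a = (w y / p y) * p a" by (simp add: field_simps)
  qed
  define K where "K a b = (if a = b then d a else 0) - H a b + p a * p b" for a b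
  have Kw: "(\<Sum>b\<in>N. K a b * w b) = d a * w a - hz w a + p a * (\<Sum>b\<in>N. p b * w b)"
    if "a \<in> N" for a w
  proof -
    have "(\<Sum>b\<in>N. K a b * w b) = (\<Sum>b\<in>N. (if a = b then d a * w b else 0) - H a b * w b + p a * (p b * w b))"
      by (intro sum.cong refl) (auto simp: K_def algebra_simps)
    also have "\<dots> = (\<Sum>b\<in>N. if a = b then d a * w b else 0) - hz w a + p a * (\<Sum>b\<in>N. p b * w b)"
      unfolding hz_def by (simp add: sum.distrib sum_subtractf sum_distrib_left)
    also have "(\<Sum>b\<in>N. if a = b then d a * w b else 0) = d a * w a"
      using that fin by (simp add: sum.delta)
    finally show ?thesis .
  qed
  have psum: "(\<Sum>a\<in>N. p a * (d a * w a - hz w a)) = 0" for w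
  proof -
    have "(\<Sum>a\<in>N. p a * (d a * w a)) = (\<Sum>a\<in>N. w a * h a)"
      unfolding d_def using pp by (intro sum.cong refl) auto
    moreover have "(\<Sum>a\<in>N. p a * hz w a) = (\<Sum>a\<in>N. w a * h a)"
      using qf_hz[of p w] qf_h[of w] sy[of p w] by simp
    ultimately show ?thesis by (simp add: algebra_simps sum_subtractf)
  qed
  have Ksum: "(\<Sum>a\<in>N. p a * (\<Sum>b\<in>N. K a b * w b)) = (\<Sum>b\<in>N. p b * w b) * (\<Sum>a\<in>N. p a * p a)" for w
  proof -
    have "(\<Sum>a\<in>N. p a * (\<Sum>b\<in>N. K a b * w b)) = (\<Sum>a\<in>N. p a * (d a * w a - hz w a) + (\<Sum>b\<in>N. p b * w b) * (p a * p a))"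
    proof (intro sum.cong refl)
      fix a assume "a \<in> N"
      show "p a * (\<Sum>b\<in>N. K a b * w b) = p a * (d a * w a - hz w a) + (\<Sum>b\<in>N. p b * w b) * (p a * p a)"
        unfolding Kw[OF \<open>a \<in> N\<close>] by (simp add: algebra_simps)
    qed
    also have "\<dots> = (\<Sum>b\<in>N. p b * w b) * (\<Sum>a\<in>N. p a * p a)"
      by (simp add: sum.distrib psum sum_distrib_left)
    finally show ?thesis .
  qed
  have injK: "\<forall>a\<in>N. w a = 0" if w0: "\<forall>a\<in>N. (\<Sum>b\<in>N. K a b * w b) = 0" for w
  proof -
    have "(\<Sum>b\<in>N. p b * w b) * (\<Sum>a\<in>N. p a * p a) = 0" using Ksum[of w] w0 by simp
    then have s0: "(\<Sum>b\<in>N. p b * w b) = 0" using sp by simp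
    then have dw: "\<forall>a\<in>N. d a * w a - hz w a = 0" using w0 Kw by simp
    have "be w w = (\<Sum>a\<in>N. w a * (d a * w a - hz w a))"
      unfolding be_def nr_def qf_hz by (simp add: algebra_simps sum_subtractf)
    also have "\<dots> = 0" using dw by simp
    finally have "\<forall>a\<in>N. w a = (w y / p y) * p a" using ker by blast
    then have "(\<Sum>b\<in>N. p b * w b) = (w y / p y) * (\<Sum>a\<in>N. p a * p a)"
      by (simp add: sum_distrib_left mult_ac)
    then have c0: "w y / p y = 0" using s0 sp by simp
    show ?thesis
    proof
      fix a assume "a \<in> N"
      then have "w a = (w y / p y) * p a" using \<open>\<forall>a\<in>N. w a = (w y / p y) * p a\<close> by blast
      then show "w a = 0" unfolding c0 by simp
    qed
  qed
  show ?thesis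
  proof (intro allI impI)
    fix z assume pz: "qf N H p z = 0"
    have hz0: "(\<Sum>a\<in>N. z a * h a) = 0" using pz sy[of p z] qf_h[of z] by simp
    obtain w where w: "\<forall>a\<in>N. (\<Sum>b\<in>N. K a b * w b) = d a * z a"
      using inj_imp_surj_fin[OF fin injK, where r="\<lambda>a. d a * z a"] by blast
    have "(\<Sum>b\<in>N. p b * w b) * (\<Sum>a\<in>N. p a * p a) = (\<Sum>a\<in>N. p a * (d a * z a))"
      using Ksum[of w] w by simp
    also have "\<dots> = (\<Sum>a\<in>N. z a * h a)" unfolding d_def using pp by (intro sum.cong refl) auto
    finally have "(\<Sum>b\<in>N. p b * w b) = 0" using hz0 sp by simp
    note s0 = this
    have dw: "\<forall>a\<in>N. d a * w a - hz w a = d a * z a"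
    proof
      fix a assume a: "a \<in> N"
      have "d a * z a = d a * w a - hz w a + p a * (\<Sum>b\<in>N. p b * w b)"
        using w a Kw[OF a, of w] by simp
      then show "d a * w a - hz w a = d a * z a" using s0 by simp
    qed
    have zw: "\<forall>a\<in>N. z a = w a - hz w a / d a"
    proof
      fix a assume a: "a \<in> N"
      have "d a \<noteq> 0" using dpos[OF a] by simp
      moreover have "d a * w a - hz w a = d a * z a" using dw a by blast
      ultimately show "z a = w a - hz w a / d a" by (simp add: field_simps)
    qed
    define Z where "Z = nr z z"
    have znn: "\<And>a. a \<in> N \<Longrightarrow> 0 \<le> d a * z a * z a"
      using dpos by (simp add: mult.assoc mult_nonneg_nonneg less_imp_le)
    have Z0: "Z \<ge> 0" unfolding Z_def nr_def using znn by (auto intro!: sum_nonneg)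
    have bzw: "be z w = Z"
    proof -
      have "be z w = (\<Sum>a\<in>N. z a * (d a * w a - hz w a))"
        unfolding be_def nr_def qf_hz by (simp add: algebra_simps sum_subtractf)
      also have "\<dots> = (\<Sum>a\<in>N. d a * z a * z a)" using dw by (intro sum.cong refl) auto
      finally show ?thesis unfolding Z_def nr_def .
    qed
    have TDw: "qf N H w w \<le> (\<Sum>a\<in>N. (hz w a)^2 / d a)"
    proof -
      have "(\<Sum>a\<in>N. p a * (\<Sum>b\<in>N. H a b * w b)^2 / (\<Sum>b\<in>N. H a b * p b)) = (\<Sum>a\<in>N. (hz w a)^2 / d a)"
        unfolding hz_def d_def h_def
      proof (intro sum.cong refl)
        fix a assume a: "a \<in> N"
        have "p a \<noteq> 0" "(\<Sum>b\<in>N. H a b * p b) \<noteq> 0" using pp hp a by force+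
        then show "p a * (\<Sum>b\<in>N. H a b * w b)\<^sup>2 / (\<Sum>b\<in>N. H a b * p b) =
          (\<Sum>b\<in>N. H a b * w b)\<^sup>2 / ((\<Sum>b\<in>N. H a b * p b) / p a)"
          by simp
      qed
      moreover have "qf N H w w \<le> (\<Sum>a\<in>N. p a * (\<Sum>b\<in>N. H a b * w b)^2 / (\<Sum>b\<in>N. H a b * p b))"
        using TD by blast
      ultimately show ?thesis by simp
    qed
    have Zexp: "Z = nr w w - 2 * qf N H w w + (\<Sum>a\<in>N. (hz w a)^2 / d a)"
    proof -
      have "Z = (\<Sum>a\<in>N. d a * w a * w a - 2 * (w a * hz w a) + (hz w a)^2 / d a)"
        unfolding Z_def nr_def
      proof (intro sum.cong refl)
        fix a assume a: "a \<in> N"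
        have dn: "d a \<noteq> 0" using dpos[OF a] by simp
        have hzE: "hz w a = d a * w a - d a * z a" using dw a by force
        show "d a * z a * z a = d a * w a * w a - 2 * (w a * hz w a) + (hz w a)^2 / d a"
          unfolding hzE using dn by (simp add: field_simps power2_eq_square)
      qed
      then show ?thesis unfolding nr_def qf_hz by (simp add: sum.distrib sum_subtractf sum_distrib_left)
    qed
    have bww: "be w w \<le> Z" unfolding be_def using Zexp TDw by linarith
    have "Z^2 \<le> be z z * be w w" using cs[of z w] bzw by simp
    also have "\<dots> \<le> be z z * Z" using bww psd[of z] by (simp add: mult_left_mono)
    finally have ZZ: "Z^2 \<le> be z z * Z" .
    show "qf N H z z \<le> 0"
    proof (cases "Z = 0")
      case True
      then have "\<forall>a\<in>N. d a * z a * z a = 0"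
        using fin znn unfolding Z_def nr_def by (subst (asm) sum_nonneg_eq_0_iff) auto
      then have "\<forall>a\<in>N. z a = 0" using dpos by force
      then show ?thesis unfolding qf_def by simp
    next
      case False
      then have "Z > 0" using Z0 by simp
      then have "Z \<le> be z z" using ZZ by (simp add: power2_eq_square)
      then show ?thesis unfolding be_def Z_def by simp
    qed
  qed
qed

definition mcon :: "'e set set \<Rightarrow> 'e \<Rightarrow> 'e set set" where
  "mcon D k = {A. k \<notin> A \<and> insert k A \<in> D}"

definition mfam :: "'e set set \<Rightarrow> 'e option \<Rightarrow> 'e set set" where
  "mfam D a = (case a of None \<Rightarrow> D | Some k \<Rightarrow> mcon D k)"

definition gp :: "'e set set \<Rightarrow> nat \<Rightarrow> ('e option \<Rightarrow> real) \<Rightarrow> real" where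
  "gp D d p = (\<Sum>I\<in>{I\<in>D. card I \<le> d}. p None ^ (d - card I) / fact (d - card I) * (\<Prod>e\<in>I. p (Some e)))"

definition hs :: "'e set set \<Rightarrow> nat \<Rightarrow> ('e option \<Rightarrow> real) \<Rightarrow> 'e option \<Rightarrow> 'e option \<Rightarrow> real" where
  "hs D m p a b = gp (mfam (mfam D a) b) (m - 2) p"

lemma mcon_sub: "D \<subseteq> Pow E \<Longrightarrow> mcon D k \<subseteq> Pow E"
  unfolding mcon_def by auto

lemma mfam_sub: "D \<subseteq> Pow E \<Longrightarrow> mfam D a \<subseteq> Pow E"
  unfolding mfam_def by (cases a) (auto dest: mcon_sub)

lemma mcon_comm: "mcon (mcon D a) b = mcon (mcon D b) a"
  unfolding mcon_def by (auto simp: insert_commute)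

lemma mfam_comm: "mfam (mfam D a) b = mfam (mfam D b) a"
  unfolding mfam_def by (cases a; cases b) (auto simp: mcon_comm)

lemma mfam_empty[simp]: "mfam {} a = {}"
  unfolding mfam_def mcon_def by (cases a) auto

lemma mfam_None[simp]: "mfam D None = D"
  unfolding mfam_def by simp

lemma mfam_Some[simp]: "mfam D (Some k) = mcon D k"
  unfolding mfam_def by simp

lemma gp_empty[simp]: "gp {} d p = 0"
  unfolding gp_def by simp

lemma sum_Ix:
  assumes "finite E"
  shows "(\<Sum>c\<in>insert None (Some ` E). f c) = f None + (\<Sum>k\<in>E. f (Some k))"
proof -
  have "(\<Sum>c\<in>insert None (Some ` E). f c) = f None + (\<Sum>c\<in>Some ` E. f c)"
    using assms by (auto simp: sum.insert)
  also have "(\<Sum>c\<in>Some ` E. f c) = (\<Sum>k\<in>E. f (Some k))"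
    by (rule sum.reindex_cong[where l=Some]) auto
  finally show ?thesis .
qed

lemma euler0:
  assumes fE: "finite E" and DE: "D \<subseteq> Pow E" and d: "1 \<le> d"
  shows "real d * gp D d p = p None * gp D (d-1) p + (\<Sum>k\<in>E. p (Some k) * gp (mcon D k) (d-1) p)"
proof -
  define y where "y = p None"
  define P where "P I = (\<Prod>e\<in>I. p (Some e))" for I
  define T where "T I = y ^ (d - card I) / fact (d - card I) * P I" for I
  define X where "X = {I\<in>D. card I \<le> d}"
  have fD: "finite D" using DE fE by (meson finite_Pow_iff finite_subset)
  have fX: "finite X" unfolding X_def using fD by simp
  have finI: "\<And>I. I \<in> D \<Longrightarrow> finite I" using DE fE by (meson PowD finite_subset subsetD)
  have gpX: "gp D d p = (\<Sum>I\<in>X. T I)" unfolding gp_def X_def T_def P_def y_def ..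
  have split: "real d * gp D d p = (\<Sum>I\<in>X. real (d - card I) * T I) + (\<Sum>I\<in>X. real (card I) * T I)"
    unfolding gpX sum_distrib_left sum.distrib[symmetric]
    by (intro sum.cong refl) (auto simp: X_def of_nat_diff algebra_simps)
  have A: "(\<Sum>I\<in>X. real (d - card I) * T I) = y * gp D (d-1) p"
  proof -
    define X' where "X' = {I\<in>D. card I \<le> d - 1}"
    have "(\<Sum>I\<in>X. real (d - card I) * T I) = (\<Sum>I\<in>X'. real (d - card I) * T I)"
      by (rule sum.mono_neutral_right[OF fX]) (auto simp: X_def X'_def)
    also have "\<dots> = (\<Sum>I\<in>X'. y * (y ^ (d - 1 - card I) / fact (d - 1 - card I) * P I))"
    proof (intro sum.cong refl)
      fix I assume "I \<in> X'"
      then have c: "card I \<le> d - 1" unfolding X'_def by simp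
      define n where "n = d - 1 - card I"
      have dn: "d - card I = Suc n" unfolding n_def using c d by simp
      show "real (d - card I) * T I = y * (y ^ (d - 1 - card I) / fact (d - 1 - card I) * P I)"
        unfolding T_def dn n_def[symmetric] by (simp add: field_simps del: of_nat_Suc)
    qed
    also have "\<dots> = y * gp D (d-1) p"
      unfolding gp_def X'_def y_def P_def by (simp add: sum_distrib_left)
    finally show ?thesis .
  qed
  have B: "(\<Sum>I\<in>X. real (card I) * T I) = (\<Sum>k\<in>E. p (Some k) * gp (mcon D k) (d-1) p)"
  proof -
    have "(\<Sum>I\<in>X. real (card I) * T I) = (\<Sum>I\<in>X. \<Sum>k\<in>{k. k \<in> E \<and> k \<in> I}. T I)"
    proof (intro sum.cong refl)
      fix I assume "I \<in> X"
      then have "I \<subseteq> E" using DE unfolding X_def by auto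
      then have "{k. k \<in> E \<and> k \<in> I} = I" by auto
      then show "real (card I) * T I = (\<Sum>k\<in>{k. k \<in> E \<and> k \<in> I}. T I)" by simp
    qed
    also have "\<dots> = (\<Sum>k\<in>E. \<Sum>I\<in>{I. I \<in> X \<and> k \<in> I}. T I)"
      by (rule sum.swap_restrict[OF fX fE])
    also have "\<dots> = (\<Sum>k\<in>E. p (Some k) * gp (mcon D k) (d-1) p)"
    proof (intro sum.cong refl)
      fix k assume kE: "k \<in> E"
      define Y where "Y = {A\<in>mcon D k. card A \<le> d - 1}"
      have img: "{I. I \<in> X \<and> k \<in> I} = insert k ` Y"
      proof (rule Set.set_eqI, rule iffI)
        fix I assume "I \<in> {I. I \<in> X \<and> k \<in> I}"
        then have I: "I \<in> D" "card I \<le> d" "k \<in> I" unfolding X_def by auto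
        have fI: "finite I" using finI I(1) .
        have "I - {k} \<in> Y" unfolding Y_def mcon_def using I fI
          by (auto simp: insert_absorb) 
        moreover have "I = insert k (I - {k})" using I by auto
        ultimately show "I \<in> insert k ` Y" by blast
      next
        fix I assume "I \<in> insert k ` Y"
        then obtain A where A: "A \<in> Y" "I = insert k A" by blast
        then have "k \<notin> A" "insert k A \<in> D" "card A \<le> d - 1" unfolding Y_def mcon_def by auto
        moreover have "finite A" using finI[OF \<open>insert k A \<in> D\<close>] by simp
        ultimately show "I \<in> {I. I \<in> X \<and> k \<in> I}" unfolding X_def using A d by auto
      qed
      have inj: "inj_on (insert k) Y"
        unfolding Y_def mcon_def inj_on_def by (metis (no_types, lifting) insert_ident mem_Collect_eq)
      have "(\<Sum>I\<in>{I. I \<in> X \<and> k \<in> I}. T I) = (\<Sum>A\<in>Y. T (insert k A))"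
        unfolding img by (rule sum.reindex[OF inj, unfolded comp_def])
      also have "\<dots> = (\<Sum>A\<in>Y. p (Some k) * (y ^ (d - 1 - card A) / fact (d - 1 - card A) * P A))"
      proof (intro sum.cong refl)
        fix A assume "A \<in> Y"
        then have A: "k \<notin> A" "insert k A \<in> D" unfolding Y_def mcon_def by auto
        have fA: "finite A" using finI[OF A(2)] by simp
        have "card (insert k A) = Suc (card A)" using A fA by simp
        moreover have "P (insert k A) = p (Some k) * P A" unfolding P_def using A fA by simp
        ultimately show "T (insert k A) = p (Some k) * (y ^ (d - 1 - card A) / fact (d - 1 - card A) * P A)"
          unfolding T_def by simp
      qed
      also have "\<dots> = p (Some k) * gp (mcon D k) (d-1) p"
        unfolding gp_def Y_def y_def P_def by (simp add: sum_distrib_left)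
      finally show "(\<Sum>I\<in>{I. I \<in> X \<and> k \<in> I}. T I) = p (Some k) * gp (mcon D k) (d-1) p" .
    qed
    finally show ?thesis .
  qed
  show ?thesis using split A B unfolding y_def by simp
qed

lemma euler:
  assumes fE: "finite E" and DE: "D \<subseteq> Pow E" and d: "1 \<le> d"
  shows "real d * gp D d p = (\<Sum>c\<in>insert None (Some ` E). p c * gp (mfam D c) (d-1) p)"
  unfolding sum_Ix[OF fE] using euler0[OF assms] by simp

lemma mat_basic:
  assumes "matroid E D"
  shows "finite E" "D \<subseteq> Pow E" "{} \<in> D" "finite D"
    "\<And>A B. B \<in> D \<Longrightarrow> A \<subseteq> B \<Longrightarrow> A \<in> D"
proof -
  show "finite E" "D \<subseteq> Pow E" "{} \<in> D" using assms unfolding matroid_def by auto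
  then show "finite D" by (meson finite_Pow_iff finite_subset)
  show "\<And>A B. B \<in> D \<Longrightarrow> A \<subseteq> B \<Longrightarrow> A \<in> D" using assms unfolding matroid_def by blast
qed

lemma mat_exch:
  assumes "matroid E D" "A \<in> D" "B \<in> D" "card A < card B"
  shows "\<exists>x\<in>B - A. insert x A \<in> D"
  using assms unfolding matroid_def by blast

lemma mat_con:
  assumes m: "matroid E D" and k: "{k} \<in> D"
  shows "matroid E (mcon D k)"
proof -
  note b = mat_basic[OF m]
  have finI: "\<And>I. I \<in> D \<Longrightarrow> finite I" using b(1,2) by (meson PowD finite_subset subsetD)
  show ?thesis unfolding matroid_def
  proof (intro conjI allI impI)
    show "finite E" by (rule b(1))
    show "mcon D k \<subseteq> Pow E" by (rule mcon_sub[OF b(2)])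
    show "{} \<in> mcon D k" unfolding mcon_def using k by simp
  next
    fix A B assume "B \<in> mcon D k \<and> A \<subseteq> B"
    then show "A \<in> mcon D k" unfolding mcon_def using b(5)[of "insert k B" "insert k A"] by auto
  next
    fix A B assume AB: "A \<in> mcon D k \<and> B \<in> mcon D k \<and> card A < card B"
    then have A: "k \<notin> A" "insert k A \<in> D" and B: "k \<notin> B" "insert k B \<in> D"
      unfolding mcon_def by auto
    have fA: "finite A" using finI[OF A(2)] by simp
    have fB: "finite B" using finI[OF B(2)] by simp
    have "card (insert k A) < card (insert k B)" using AB A B fA fB by simp
    then obtain x where x: "x \<in> insert k B - insert k A" "insert x (insert k A) \<in> D"
      using mat_exch[OF m A(2) B(2)] by blast
    then have "x \<in> B - A" "insert x A \<in> mcon D k" unfolding mcon_def using A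
      by (auto simp: insert_commute)
    then show "\<exists>x\<in>B - A. insert x A \<in> mcon D k" by blast
  qed
qed

lemma mfam_mat:
  assumes m: "matroid E D" and e: "{} \<in> mfam D c"
  shows "matroid E (mfam D c)"
proof (cases c)
  case None then show ?thesis using m by simp
next
  case (Some k)
  then have "{k} \<in> D" using e by (simp add: mcon_def)
  then show ?thesis using mat_con[OF m] Some by simp
qed

lemma mfam_emp:
  assumes m: "matroid E D" and e: "{} \<notin> mfam D c"
  shows "mfam D c = {}"
proof (cases c)
  case None then show ?thesis using mat_basic(3)[OF m] e by simp
next
  case (Some k)
  have "{k} \<notin> D" using e Some by (simp add: mcon_def)
  have "mcon D k = {}"
  proof (rule ccontr)
    assume "mcon D k \<noteq> {}"
    then obtain A where "insert k A \<in> D" unfolding mcon_def by auto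
    then have "{k} \<in> D" using mat_basic(5)[OF m, of "insert k A" "{k}"] by auto
    then show False using \<open>{k} \<notin> D\<close> by simp
  qed
  then show ?thesis using Some by simp
qed

lemma gp_nonneg:
  assumes "\<forall>a. 0 < p a"
  shows "0 \<le> gp D d p"
  unfolding gp_def using assms
  by (intro sum_nonneg mult_nonneg_nonneg divide_nonneg_pos prod_nonneg zero_le_power)
     (auto simp: less_imp_le)

lemma gp_pos:
  assumes fD: "finite D" and e: "{} \<in> D" and pp: "\<forall>a. 0 < p a"
  shows "0 < gp D d p"
  unfolding gp_def
proof (rule sum_pos2[where i="{}"])
  show "finite {I \<in> D. card I \<le> d}" using fD by simp
  show "{} \<in> {I \<in> D. card I \<le> d}" using e by simp
  show "0 < p None ^ (d - card {}) / fact (d - card {}) * (\<Prod>e\<in>{}. p (Some e))"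
    using pp by simp
  show "\<And>i. i \<in> {I \<in> D. card I \<le> d} \<Longrightarrow> 0 \<le> p None ^ (d - card i) / fact (d - card i) * (\<Prod>e\<in>i. p (Some e))"
    using pp by (intro mult_nonneg_nonneg divide_nonneg_pos prod_nonneg zero_le_power) (auto simp: less_imp_le)
qed

lemma gp0:
  assumes "finite E" "D \<subseteq> Pow E"
  shows "gp D 0 p = (if {} \<in> D then 1 else 0)"
proof -
  have fin: "\<And>I. I \<in> D \<Longrightarrow> finite I" using assms by (meson PowD finite_subset subsetD)
  have "{I \<in> D. card I \<le> 0} = D \<inter> {{}}"
    using fin by (auto simp: card_eq_0_iff)
  then show ?thesis unfolding gp_def by auto
qed

lemma hs_sym: "hs D m p a b = hs D m p b a"
  unfolding hs_def by (simp add: mfam_comm)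

lemma hs_row:
  assumes fE: "finite E" and DE: "D \<subseteq> Pow E" and m: "2 \<le> m"
  shows "(\<Sum>b\<in>insert None (Some ` E). hs D m p a b * p b) = real (m - 1) * gp (mfam D a) (m - 1) p"
proof -
  have "real (m - 1) * gp (mfam D a) (m - 1) p
      = (\<Sum>c\<in>insert None (Some ` E). p c * gp (mfam (mfam D a) c) (m - 1 - 1) p)"
    using euler[OF fE mfam_sub[OF DE], of "m - 1" a p] m by simp
  also have "\<dots> = (\<Sum>b\<in>insert None (Some ` E). hs D m p a b * p b)"
  proof -
    have e: "m - 1 - 1 = m - 2" by simp
    show ?thesis unfolding hs_def e by (simp add: mult.commute)
  qed
  finally show ?thesis by simp
qed

lemma mfam_comm3: "mfam (mfam (mfam D a) b) c = mfam (mfam (mfam D c) a) b"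
proof -
  have 1: "mfam (mfam (mfam D a) b) c = mfam (mfam (mfam D a) c) b" by (rule mfam_comm)
  have 2: "mfam (mfam D a) c = mfam (mfam D c) a" by (rule mfam_comm)
  show ?thesis unfolding 1 2 by (rule refl)
qed

lemma hs_dec:
  assumes fE: "finite E" and DE: "D \<subseteq> Pow E" and m: "3 \<le> m"
  shows "real (m - 2) * hs D m p a b = (\<Sum>c\<in>insert None (Some ` E). p c * hs (mfam D c) (m - 1) p a b)"
proof -
  have "real (m - 2) * hs D m p a b
      = (\<Sum>c\<in>insert None (Some ` E). p c * gp (mfam (mfam (mfam D a) b) c) (m - 2 - 1) p)"
  proof -
    have X: "mfam (mfam D a) b \<subseteq> Pow E" by (intro mfam_sub DE)
    show ?thesis unfolding hs_def using euler[OF fE X, of "m - 2" p] m by simp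
  qed
  also have "\<dots> = (\<Sum>c\<in>insert None (Some ` E). p c * hs (mfam D c) (m - 1) p a b)"
  proof -
    have e: "m - 2 - 1 = m - 1 - 2" by simp
    show ?thesis unfolding hs_def e mfam_comm3[of D a b] ..
  qed
  finally show ?thesis .
qed

lemma equiv_psd:
  fixes u :: "'a \<Rightarrow> real"
  assumes fL: "finite L" and rf: "\<forall>k\<in>L. R k k"
    and sy: "\<forall>k\<in>L. \<forall>k'\<in>L. R k k' \<longrightarrow> R k' k"
    and tr: "\<forall>a\<in>L. \<forall>b\<in>L. \<forall>c\<in>L. R a b \<longrightarrow> R b c \<longrightarrow> R a c"
  shows "0 \<le> (\<Sum>k\<in>L. \<Sum>k'\<in>L. if R k k' then u k * u k' else 0)"
proof -
  define C where "C k = {k'. k' \<in> L \<and> R k k'}" for k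
  define S where "S k = (\<Sum>k'\<in>C k. u k')" for k
  define c where "c k = real (card (C k))" for k
  have Ceq: "C k = C k'" if "k \<in> L" "k' \<in> L" "R k k'" for k k'
    unfolding C_def using that sy tr by blast
  have cpos: "c k > 0" if "k \<in> L" for k
    unfolding c_def using that rf fL C_def by (auto simp: card_gt_0_iff)
  have "(\<Sum>k\<in>L. \<Sum>k'\<in>L. if R k k' then u k * u k' else 0) = (\<Sum>k\<in>L. u k * S k)"
    unfolding S_def C_def using fL
    by (intro sum.cong refl) (simp add: sum.inter_filter[symmetric] sum_distrib_left)
  also have "\<dots> = (\<Sum>k\<in>L. (S k)^2 / c k)"
  proof -
    have "(\<Sum>k\<in>L. (S k)^2 / c k) = (\<Sum>k\<in>L. \<Sum>k'\<in>{k'. k' \<in> L \<and> R k k'}. u k' * S k / c k)"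
      unfolding S_def C_def by (intro sum.cong refl) (simp add: power2_eq_square sum_distrib_right sum_divide_distrib)
    also have "\<dots> = (\<Sum>k'\<in>L. \<Sum>k\<in>{k. k \<in> L \<and> R k k'}. u k' * S k / c k)"
      by (rule sum.swap_restrict[OF fL fL])
    also have "\<dots> = (\<Sum>k'\<in>L. \<Sum>k\<in>C k'. u k' * S k' / c k')"
    proof (rule sum.cong[OF refl])
      fix k' assume k': "k' \<in> L"
      have e1: "{k. k \<in> L \<and> R k k'} = C k'" unfolding C_def using sy k' by blast
      have e2: "u k' * S k / c k = u k' * S k' / c k'" if "k \<in> C k'" for k
      proof -
        have "k \<in> L" "R k k'" using that k' sy unfolding C_def by auto
        then have "C k = C k'" using Ceq k' by blast
        then show ?thesis unfolding S_def c_def by simp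
      qed
      show "(\<Sum>k\<in>{k. k \<in> L \<and> R k k'}. u k' * S k / c k) = (\<Sum>k\<in>C k'. u k' * S k' / c k')"
        using e1 e2 by (metis (no_types, lifting) sum.cong)
    qed
    also have "\<dots> = (\<Sum>k'\<in>L. u k' * S k')"
    proof (intro sum.cong refl)
      fix k' assume k': "k' \<in> L"
      have "(\<Sum>k\<in>C k'. u k' * S k' / c k') = c k' * (u k' * S k' / c k')"
        unfolding c_def by simp
      then show "(\<Sum>k\<in>C k'. u k' * S k' / c k') = u k' * S k'" using cpos[OF k'] by simp
    qed
    finally show ?thesis by simp
  qed
  also have "\<dots> \<ge> 0" using cpos by (intro sum_nonneg) (simp add: less_imp_le)
  finally show ?thesis .
qed

lemma qf_restrict:
  assumes fI: "finite I" and NI: "N \<subseteq> I"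
    and z: "\<forall>a\<in>I - N. \<forall>b\<in>I. H a b = 0 \<and> H b a = 0"
  shows "qf N H u v = qf I H u v"
proof -
  have "qf I H u v = (\<Sum>a\<in>N. \<Sum>b\<in>I. u a * H a b * v b)"
    unfolding qf_def using z fI NI by (intro sum.mono_neutral_right) auto
  also have "\<dots> = qf N H u v"
    unfolding qf_def using z fI NI by (intro sum.cong refl sum.mono_neutral_right) auto
  finally show ?thesis by simp
qed

lemma row_restrict:
  fixes H :: "'a \<Rightarrow> 'a \<Rightarrow> real"
  assumes fI: "finite I" and NI: "N \<subseteq> I"
    and z: "\<forall>a\<in>I - N. \<forall>b\<in>I. H a b = 0 \<and> H b a = 0" and aI: "a \<in> I"
  shows "(\<Sum>b\<in>N. H a b * v b) = (\<Sum>b\<in>I. H a b * v b)"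
  using z fI NI aI by (intro sum.mono_neutral_left) auto

lemma base_lor:
  assumes m: "matroid E D"
  shows "lorz (insert None (Some ` E)) (hs D 2 p)"
proof -
  note b = mat_basic[OF m]
  define Ix where "Ix = insert None (Some ` E)"
  define H where "H = hs D 2 p"
  have fIx: "finite Ix" unfolding Ix_def using b(1) by simp
  have Hv: "H a b = (if {} \<in> mfam (mfam D a) b then 1 else 0)" for a b
    unfolding H_def hs_def using gp0[OF b(1) mfam_sub[OF mfam_sub[OF b(2)]]] by simp
  have HNN: "H None None = 1" using Hv b(3) by simp
  have HNS: "H None (Some k) = (if {k} \<in> D then 1 else 0)" for k using Hv by (simp add: mcon_def)
  have HSN: "H (Some k) None = (if {k} \<in> D then 1 else 0)" for k using Hv by (simp add: mcon_def)
  have HSS: "H (Some k) (Some k') = (if k \<noteq> k' \<and> {k, k'} \<in> D then 1 else 0)" for k k'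
    using Hv by (simp add: mcon_def)
  have symH: "\<forall>a\<in>Ix. \<forall>b\<in>Ix. H a b = H b a" unfolding H_def using hs_sym by blast
  define x :: "'a option \<Rightarrow> real" where "x a = (if a = None then 1 else 0)" for a
  have qx: "qf Ix H x v = (\<Sum>b\<in>Ix. H None b * v b)" for v
    unfolding qf_def Ix_def sum_Ix[OF b(1)] x_def by simp
  have xx: "0 < qf Ix H x x"
  proof -
    have "qf Ix H x x = (\<Sum>b\<in>Ix. H None b * x b)" by (rule qx)
    also have "\<dots> = 1" unfolding Ix_def sum_Ix[OF b(1)] using HNN by (simp add: x_def)
    finally show ?thesis by simp
  qed
  define L where "L = {k\<in>E. {k} \<in> D}"
  have fL: "finite L" unfolding L_def using b(1) by simp
  have hyp: "\<forall>z. qf Ix H x z = 0 \<longrightarrow> qf Ix H z z \<le> 0"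
  proof (intro allI impI)
    fix z assume xz: "qf Ix H x z = 0"
    define u where "u k = z (Some k)" for k
    define S where "S = (\<Sum>k\<in>L. u k)"
    have SE: "(\<Sum>k\<in>E. (if {k} \<in> D then 1 else 0) * u k) = S"
    proof -
      have "(\<Sum>k\<in>E. (if {k} \<in> D then 1 else 0) * u k) = (\<Sum>k\<in>E. if {k} \<in> D then u k else 0)"
        by (intro sum.cong refl) simp
      also have "\<dots> = S" unfolding S_def L_def using b(1) by (simp add: sum.inter_filter)
      finally show ?thesis .
    qed
    have "qf Ix H x z = (\<Sum>b\<in>Ix. H None b * z b)" by (rule qx)
    also have "\<dots> = z None + (\<Sum>k\<in>E. (if {k} \<in> D then 1 else 0) * u k)"
      unfolding Ix_def sum_Ix[OF b(1)] HNN HNS u_def by simp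
    finally have zN: "z None = - S" using xz SE by simp
    have "qf Ix H z z = z None * z None * H None None + (\<Sum>k\<in>E. z None * H None (Some k) * u k)
       + ((\<Sum>k\<in>E. u k * H (Some k) None * z None) + (\<Sum>k\<in>E. \<Sum>k'\<in>E. u k * H (Some k) (Some k') * u k'))"
      unfolding qf_def Ix_def sum_Ix[OF b(1)] u_def by (simp add: sum.distrib)
    also have "\<dots> = z None * z None + 2 * z None * S + (\<Sum>k\<in>E. \<Sum>k'\<in>E. if k \<noteq> k' \<and> {k, k'} \<in> D then u k * u k' else 0)"
    proof -
      have "(\<Sum>k\<in>E. z None * H None (Some k) * u k) = z None * S"
        unfolding HNS SE[symmetric] by (simp add: sum_distrib_left mult_ac)
      moreover have "(\<Sum>k\<in>E. u k * H (Some k) None * z None) = z None * S"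
        unfolding HSN SE[symmetric] by (simp add: sum_distrib_left mult_ac)
      moreover have "(\<Sum>k\<in>E. \<Sum>k'\<in>E. u k * H (Some k) (Some k') * u k') = (\<Sum>k\<in>E. \<Sum>k'\<in>E. if k \<noteq> k' \<and> {k, k'} \<in> D then u k * u k' else 0)"
        unfolding HSS by (intro sum.cong refl) simp
      ultimately show ?thesis using HNN by simp
    qed
    finally have qzz: "qf Ix H z z = (\<Sum>k\<in>E. \<Sum>k'\<in>E. if k \<noteq> k' \<and> {k, k'} \<in> D then u k * u k' else 0) - S * S"
      unfolding zN by simp
    have JL: "(\<Sum>k\<in>E. \<Sum>k'\<in>E. if k \<noteq> k' \<and> {k, k'} \<in> D then u k * u k' else 0)
        = (\<Sum>k\<in>L. \<Sum>k'\<in>L. if k \<noteq> k' \<and> {k, k'} \<in> D then u k * u k' else 0)"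
    proof -
      have inL: "k \<in> L" "k' \<in> L" if "{k, k'} \<in> D" "k \<in> E" "k' \<in> E" for k k'
        unfolding L_def using that b(5)[of "{k,k'}" "{k}"] b(5)[of "{k,k'}" "{k'}"] by auto
      have "(\<Sum>k\<in>E. \<Sum>k'\<in>E. if k \<noteq> k' \<and> {k, k'} \<in> D then u k * u k' else 0)
          = (\<Sum>k\<in>E. \<Sum>k'\<in>L. if k \<noteq> k' \<and> {k, k'} \<in> D then u k * u k' else 0)"
        using b(1) inL by (intro sum.cong refl sum.mono_neutral_right) (auto simp: L_def)
      also have "\<dots> = (\<Sum>k\<in>L. \<Sum>k'\<in>L. if k \<noteq> k' \<and> {k, k'} \<in> D then u k * u k' else 0)"
      proof (rule sum.mono_neutral_right)
        show "finite E" by (rule b(1))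
        show "L \<subseteq> E" unfolding L_def by auto
        have "\<forall>i\<in>E - L. \<forall>k'\<in>L. (if i \<noteq> k' \<and> {i, k'} \<in> D then u i * u k' else 0) = 0"
          using inL unfolding L_def by auto
        then show "\<forall>i\<in>E - L. (\<Sum>k'\<in>L. if i \<noteq> k' \<and> {i, k'} \<in> D then u i * u k' else 0) = 0"
          by simp
      qed
      finally show ?thesis .
    qed
    have SS: "S * S = (\<Sum>k\<in>L. \<Sum>k'\<in>L. u k * u k')"
      unfolding S_def by (simp add: sum_product)
    define R where "R k k' = (\<not> (k \<noteq> k' \<and> {k, k'} \<in> D))" for k k'
    have diff: "S * S - (\<Sum>k\<in>L. \<Sum>k'\<in>L. if k \<noteq> k' \<and> {k, k'} \<in> D then u k * u k' else 0)
        = (\<Sum>k\<in>L. \<Sum>k'\<in>L. if R k k' then u k * u k' else 0)"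
      unfolding SS R_def by (simp add: sum_subtractf[symmetric] if_distrib cong: if_cong) (intro sum.cong refl, auto)
    have "0 \<le> (\<Sum>k\<in>L. \<Sum>k'\<in>L. if R k k' then u k * u k' else 0)"
    proof (rule equiv_psd[OF fL])
      show "\<forall>k\<in>L. R k k" unfolding R_def by simp
      show "\<forall>k\<in>L. \<forall>k'\<in>L. R k k' \<longrightarrow> R k' k" unfolding R_def by (auto simp: insert_commute)
      show "\<forall>a\<in>L. \<forall>b\<in>L. \<forall>c\<in>L. R a b \<longrightarrow> R b c \<longrightarrow> R a c"
      proof (intro ballI impI)
        fix a b' c assume abc: "a \<in> L" "b' \<in> L" "c \<in> L" and r1: "R a b'" and r2: "R b' c"
        show "R a c"
        proof (rule ccontr)
          assume "\<not> R a c"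
          then have ac: "a \<noteq> c" "{a, c} \<in> D" unfolding R_def by auto
          have bD: "{b'} \<in> D" using abc unfolding L_def by simp
          have "a \<noteq> b'" using \<open>\<not> R a c\<close> r2 by (auto simp: R_def)
          have "b' \<noteq> c" using \<open>\<not> R a c\<close> r1 by (auto simp: R_def)
          have n1: "{a, b'} \<notin> D" using r1 \<open>a \<noteq> b'\<close> by (simp add: R_def)
          have n2: "{b', c} \<notin> D" using r2 \<open>b' \<noteq> c\<close> by (simp add: R_def)
          have "card {b'} < card {a, c}" using ac by simp
          then obtain e where e: "e \<in> {a, c} - {b'}" "insert e {b'} \<in> D"
            using mat_exch[OF m bD ac(2)] by blast
          then show False using n1 n2 by (auto simp: insert_commute)
        qed
      qed
    qed
    then show "qf Ix H z z \<le> 0" using qzz JL diff by linarith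
  qed
  have "lorz Ix H" using lorz_from_hyperplane[OF symH xx hyp] .
  then show ?thesis unfolding Ix_def H_def .
qed

lemma step_lor:
  assumes IH: "\<forall>D. matroid E D \<longrightarrow> (\<forall>p. (\<forall>a. 0 < p a) \<longrightarrow> lorz (insert None (Some ` E)) (hs D m p))"
    and m2: "2 \<le> m" and mat: "matroid E D" and pp: "\<forall>a. 0 < p a"
  shows "lorz (insert None (Some ` E)) (hs D (Suc m) p)"
proof -
  note b = mat_basic[OF mat]
  define Ix where "Ix = insert None (Some ` E)"
  define H where "H = hs D (Suc m) p"
  define Hc where "Hc c = hs (mfam D c) m p" for c
  define N where "N = {c\<in>Ix. {} \<in> mfam D c}"
  have fIx: "finite Ix" unfolding Ix_def using b(1) by simp
  have NIx: "N \<subseteq> Ix" unfolding N_def by auto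
  have fN: "finite N" using fIx NIx finite_subset by blast
  have NoneN: "None \<in> N" unfolding N_def Ix_def using b(3) by simp
  have symH: "H a b = H b a" for a b unfolding H_def by (rule hs_sym)
  have fam_fin: "finite F" if "F \<subseteq> Pow E" for F using that b(1) by (meson finite_Pow_iff finite_subset)
  have zero: "\<forall>a\<in>Ix - N. \<forall>b\<in>Ix. H a b = 0 \<and> H b a = 0"
  proof (intro ballI)
    fix a b assume a: "a \<in> Ix - N" and "b \<in> Ix"
    then have "mfam D a = {}" using mfam_emp[OF mat] unfolding N_def by auto
    then have "H a b = 0" unfolding H_def hs_def by simp
    then show "H a b = 0 \<and> H b a = 0" using symH by simp
  qed
  have Hc0: "Hc c a b = 0" if "c \<in> Ix" "c \<notin> N" for c a b
  proof -
    have "mfam D c = {}" using mfam_emp[OF mat] that unfolding N_def by auto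
    then show ?thesis unfolding Hc_def hs_def by simp
  qed
  have nnH: "0 \<le> H a b" for a b unfolding H_def hs_def using gp_nonneg pp by blast
  have rowH: "(\<Sum>b\<in>Ix. H a b * p b) = real m * gp (mfam D a) m p" for a
    unfolding Ix_def H_def using hs_row[OF b(1) b(2), of "Suc m" p a] m2 by simp
  have rowHc: "(\<Sum>b\<in>Ix. Hc c a b * p b) = real (m - 1) * H c a" for c a
  proof -
    have "(\<Sum>b\<in>Ix. Hc c a b * p b) = real (m - 1) * gp (mfam (mfam D c) a) (m - 1) p"
      unfolding Ix_def Hc_def using hs_row[OF b(1) mfam_sub[OF b(2)] m2] by simp
    also have "\<dots> = real (m - 1) * H c a" unfolding H_def hs_def by simp
    finally show ?thesis .
  qed
  have dec: "real (m - 1) * H a b = (\<Sum>c\<in>Ix. p c * Hc c a b)" for a b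
    unfolding Ix_def H_def Hc_def using hs_dec[OF b(1) b(2), of "Suc m" p a b] m2 by simp
  have hpos: "0 < (\<Sum>b\<in>Ix. H a b * p b)" if "a \<in> N" for a
  proof -
    have "0 < gp (mfam D a) m p"
      using gp_pos[OF fam_fin[OF mfam_sub[OF b(2)]] _ pp] that unfolding N_def by blast
    then show ?thesis unfolding rowH using m2 by simp
  qed
  have conn: "0 < H None a" if "a \<in> N" for a
  proof -
    have "0 < gp (mfam D a) (Suc m - 2) p"
      using gp_pos[OF fam_fin[OF mfam_sub[OF b(2)]] _ pp] that unfolding N_def by blast
    then show ?thesis unfolding H_def hs_def by simp
  qed
  have qfeq: "qf N H u v = qf Ix H u v" for u v by (rule qf_restrict[OF fIx NIx zero])
  have rowr: "(\<Sum>b\<in>N. H a b * v b) = (\<Sum>b\<in>Ix. H a b * v b)" if "a \<in> N" for a v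
    using row_restrict[OF fIx NIx zero] that NIx by blast
  define hz where "hz z c = (\<Sum>b\<in>Ix. H c b * z b)" for z c
  define hp where "hp c = (\<Sum>b\<in>Ix. H c b * p b)" for c
  have m1: "real (m - 1) > 0" using m2 by simp
  have qHc: "qf Ix (Hc c) p v = real (m - 1) * hz v c" for c v
  proof -
    have "qf Ix (Hc c) p v = (\<Sum>b\<in>Ix. \<Sum>a\<in>Ix. p a * Hc c a b * v b)"
      unfolding qf_def by (rule sum.swap)
    also have "\<dots> = (\<Sum>b\<in>Ix. (\<Sum>a\<in>Ix. Hc c b a * p a) * v b)"
    proof (rule sum.cong[OF refl])
      fix b
      have sw: "\<And>a. Hc c a b = Hc c b a" unfolding Hc_def by (rule hs_sym)
      show "(\<Sum>a\<in>Ix. p a * Hc c a b * v b) = (\<Sum>a\<in>Ix. Hc c b a * p a) * v b"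
        by (simp add: sw sum_distrib_right sum_distrib_left mult_ac)
    qed
    also have "\<dots> = (\<Sum>b\<in>Ix. real (m - 1) * H c b * v b)" unfolding rowHc ..
    also have "\<dots> = real (m - 1) * hz v c" unfolding hz_def by (simp add: sum_distrib_left mult_ac)
    finally show ?thesis .
  qed
  have decq: "real (m - 1) * qf Ix H z z = (\<Sum>c\<in>Ix. p c * qf Ix (Hc c) z z)" for z
  proof -
    have "real (m - 1) * qf Ix H z z = (\<Sum>a\<in>Ix. \<Sum>b\<in>Ix. z a * (real (m - 1) * H a b) * z b)"
      unfolding qf_def by (simp add: sum_distrib_left mult_ac)
    also have "\<dots> = (\<Sum>a\<in>Ix. \<Sum>b\<in>Ix. \<Sum>c\<in>Ix. p c * (z a * Hc c a b * z b))"
      unfolding dec by (simp add: sum_distrib_left sum_distrib_right mult_ac)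
    also have "\<dots> = (\<Sum>a\<in>Ix. \<Sum>c\<in>Ix. \<Sum>b\<in>Ix. p c * (z a * Hc c a b * z b))"
      by (intro sum.cong refl sum.swap)
    also have "\<dots> = (\<Sum>c\<in>Ix. \<Sum>a\<in>Ix. \<Sum>b\<in>Ix. p c * (z a * Hc c a b * z b))"
      by (rule sum.swap)
    also have "\<dots> = (\<Sum>c\<in>Ix. p c * qf Ix (Hc c) z z)"
      unfolding qf_def by (simp add: sum_distrib_left)
    finally show ?thesis .
  qed
  have TD: "\<forall>z. qf N H z z \<le> (\<Sum>a\<in>N. p a * (\<Sum>b\<in>N. H a b * z b)^2 / (\<Sum>b\<in>N. H a b * p b))"
  proof
    fix z
    have each: "p c * qf Ix (Hc c) z z \<le> (if c \<in> N then p c * (real (m - 1) * (hz z c)^2 / hp c) else 0)"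
      if c: "c \<in> Ix" for c
    proof (cases "c \<in> N")
      case False
      then have "qf Ix (Hc c) z z = 0" unfolding qf_def using Hc0[OF c] by simp
      then show ?thesis using False by simp
    next
      case True
      have "{} \<in> mfam D c" using True unfolding N_def by simp
      then have "matroid E (mfam D c)" by (rule mfam_mat[OF mat])
      then have lc: "lorz Ix (Hc c)" using IH pp unfolding Hc_def Ix_def by blast
      have hpc: "hp c > 0" unfolding hp_def using hpos[OF True] .
      have qpp: "qf Ix (Hc c) p p = real (m - 1) * hp c" unfolding qHc hz_def hp_def ..
      have qpp0: "0 < qf Ix (Hc c) p p" unfolding qpp using hpc m1 by simp
      have "qf Ix (Hc c) p p * qf Ix (Hc c) z z \<le> (qf Ix (Hc c) p z)^2"
        using lc qpp0 unfolding lorz_def by blast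
      have "real (m - 1) * hp c * qf Ix (Hc c) z z \<le> (real (m - 1))^2 * (hz z c)^2"
      proof -
        have hzp: "hz p c = hp c" unfolding hz_def hp_def ..
        show ?thesis using \<open>qf Ix (Hc c) p p * qf Ix (Hc c) z z \<le> (qf Ix (Hc c) p z)^2\<close>
          unfolding qpp qHc hzp by (simp add: power_mult_distrib)
      qed
      then have "hp c * qf Ix (Hc c) z z \<le> real (m - 1) * (hz z c)^2"
        using m1 by (simp add: power2_eq_square mult.assoc)
      then have "qf Ix (Hc c) z z \<le> real (m - 1) * (hz z c)^2 / hp c"
        using hpc by (simp add: field_simps)
      then have "p c * qf Ix (Hc c) z z \<le> p c * (real (m - 1) * (hz z c)^2 / hp c)"
        using pp by (intro mult_left_mono) (auto simp: less_imp_le)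
      then show ?thesis using True by simp
    qed
    have "real (m - 1) * qf Ix H z z \<le> (\<Sum>c\<in>Ix. if c \<in> N then p c * (real (m - 1) * (hz z c)^2 / hp c) else 0)"
      unfolding decq using each by (rule sum_mono)
    also have "\<dots> = (\<Sum>c\<in>N. p c * (real (m - 1) * (hz z c)^2 / hp c))"
      using fIx NIx by (simp add: sum.inter_filter[symmetric] N_def)
    also have "\<dots> = real (m - 1) * (\<Sum>c\<in>N. p c * (hz z c)^2 / hp c)"
      by (simp add: sum_distrib_left mult_ac)
    finally have "qf Ix H z z \<le> (\<Sum>c\<in>N. p c * (hz z c)^2 / hp c)" using m1 by simp
    moreover have "(\<Sum>c\<in>N. p c * (hz z c)^2 / hp c) = (\<Sum>a\<in>N. p a * (\<Sum>b\<in>N. H a b * z b)^2 / (\<Sum>b\<in>N. H a b * p b))"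
      unfolding hz_def hp_def by (intro sum.cong refl) (simp add: rowr)
    ultimately show "qf N H z z \<le> (\<Sum>a\<in>N. p a * (\<Sum>b\<in>N. H a b * z b)^2 / (\<Sum>b\<in>N. H a b * p b))"
      unfolding qfeq by simp
  qed
  have hyp: "\<forall>z. qf N H p z = 0 \<longrightarrow> qf N H z z \<le> 0"
  proof (rule partA[OF fN NoneN])
    show "\<forall>a\<in>N. \<forall>b\<in>N. H a b = H b a" using symH by blast
    show "\<forall>a\<in>N. \<forall>b\<in>N. 0 \<le> H a b" using nnH by blast
    show "\<forall>a\<in>N. 0 < p a" using pp by blast
    show "\<forall>a\<in>N. 0 < (\<Sum>b\<in>N. H a b * p b)" using hpos rowr by simp
    show "\<forall>a\<in>N. 0 < H None a" using conn by blast
    show "\<forall>z. qf N H z z \<le> (\<Sum>a\<in>N. p a * (\<Sum>b\<in>N. H a b * z b)^2 / (\<Sum>b\<in>N. H a b * p b))" by (rule TD)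
  qed
  have pp0: "0 < qf N H p p"
  proof -
    have "qf N H p p = (\<Sum>a\<in>N. p a * (\<Sum>b\<in>N. H a b * p b))"
      unfolding qf_def by (simp add: sum_distrib_left mult_ac)
    also have "\<dots> > 0" using fN NoneN pp hpos rowr
      by (intro sum_pos) auto
    finally show ?thesis .
  qed
  have "lorz N H" by (rule lorz_from_hyperplane[OF _ pp0 hyp]) (use symH in blast)
  then have "lorz Ix H" unfolding lorz_def qfeq .
  then show ?thesis unfolding Ix_def H_def .
qed

lemma main_lor:
  assumes "2 \<le> m"
  shows "\<forall>D. matroid E D \<longrightarrow> (\<forall>p. (\<forall>a. 0 < p a) \<longrightarrow> lorz (insert None (Some ` E)) (hs D m p))"
  using assms
proof (induction m rule: nat_induct_at_least)
  case base
  then show ?case using base_lor by blast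
next
  case (Suc m)
  then show ?case using step_lor[OF Suc.IH Suc.hyps] by blast
qed

lemma lim_nonneg:
  fixes \<Phi> :: "real \<Rightarrow> real"
  assumes c: "isCont \<Phi> 0" and pos: "\<forall>t>0. 0 \<le> \<Phi> t"
  shows "0 \<le> \<Phi> 0"
proof -
  have "(\<Phi> \<longlongrightarrow> \<Phi> 0) (at_right 0)"
    using c unfolding isCont_def by (rule tendsto_within_subset) simp
  moreover have "\<forall>\<^sub>F t in at_right 0. 0 \<le> \<Phi> t"
    by (rule eventually_mono[OF eventually_at_right_less]) (use pos in auto)
  ultimately show ?thesis
    by (rule tendsto_lowerbound) (simp add: trivial_limit_at_right_real)
qed

definition pt :: "real \<Rightarrow> 'e option \<Rightarrow> real" where
  "pt t a = (if a = None then t else 1)"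

lemma gp_pt: "gp F d (pt t) = (\<Sum>I\<in>{I\<in>F. card I \<le> d}. t ^ (d - card I) / fact (d - card I))"
  unfolding gp_def pt_def by simp

lemma gp_pt0:
  assumes "finite E" "F \<subseteq> Pow E"
  shows "gp F d (pt 0) = real (card {I\<in>F. card I = d})"
proof -
  have fF: "finite F" using assms by (meson finite_Pow_iff finite_subset)
  have "gp F d (pt 0) = (\<Sum>I\<in>{I\<in>F. card I \<le> d}. if card I = d then 1 else 0)"
    unfolding gp_pt by (intro sum.cong refl) (auto simp: power_0_left)
  also have "\<dots> = real (card {I\<in>{I\<in>F. card I \<le> d}. card I = d})"
    using fF by (simp add: sum.inter_filter[symmetric])
  also have "{I\<in>{I\<in>F. card I \<le> d}. card I = d} = {I\<in>F. card I = d}" by auto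
  finally show ?thesis .
qed

lemma qf_ind:
  assumes fE: "finite E"
  defines "z \<equiv> (\<lambda>a. if a = None then 1 else 0) :: 'e option \<Rightarrow> real"
    and "w \<equiv> (\<lambda>a. if a = None then 0 else 1) :: 'e option \<Rightarrow> real"
  shows "qf (insert None (Some ` E)) H z z = H None None"
    "qf (insert None (Some ` E)) H z w = (\<Sum>k\<in>E. H None (Some k))"
    "qf (insert None (Some ` E)) H w w = (\<Sum>k\<in>E. \<Sum>k'\<in>E. H (Some k) (Some k'))"
  unfolding qf_def sum_Ix[OF fE] z_def w_def by simp_all

lemma fvec_pos:
  assumes m: "matroid E D" and k: "k \<le> matroid_rank D"
  shows "0 < fvec D k"
proof -
  note b = mat_basic[OF m]
  have "matroid_rank D \<in> card ` D"
    unfolding matroid_rank_def using b(3,4) by (intro Max_in) auto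
  then obtain B where B: "B \<in> D" "card B = matroid_rank D" by auto
  obtain A where A: "A \<subseteq> B" "card A = k" using k B(2) by (metis obtain_subset_with_card_n)
  have "A \<in> D" using b(5)[OF B(1) A(1)] .
  then have "{I\<in>D. card I = k} \<noteq> {}" using A by auto
  moreover have "finite {I\<in>D. card I = k}" using b(4) by simp
  ultimately show ?thesis unfolding fvec_def by (simp add: card_gt_0_iff)
qed

theorem theorem1:
  fixes E :: "'e set" and Delta :: "'e set set"
  assumes "matroid E Delta"
    and "realizable_over TYPE('k::field) E Delta"
  shows "\<forall>i. 1 \<le> i \<and> i + 1 \<le> matroid_rank Delta \<longrightarrow>
           fvec Delta (i - 1) * fvec Delta (i + 1) < (fvec Delta i)^2"
proof (intro allI impI)
  fix i assume i: "1 \<le> i \<and> i + 1 \<le> matroid_rank Delta"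
  note mat = assms(1)
  note b = mat_basic[OF mat]
  define D where "D = Delta"
  define z where "z = ((\<lambda>a. if a = None then 1 else 0) :: 'e option \<Rightarrow> real)"
  define w where "w = ((\<lambda>a. if a = None then 0 else 1) :: 'e option \<Rightarrow> real)"
  define A where "A t = gp D (i - 1) (pt t)" for t
  define B where "B t = (\<Sum>k\<in>E. gp (mcon D k) (i - 1) (pt t))" for t
  define C where "C t = (\<Sum>k\<in>E. \<Sum>k'\<in>E. gp (mcon (mcon D k) k') (i - 1) (pt t))" for t
  have ineq: "A t * C t \<le> (B t)^2" if t: "t > 0" for t
  proof -
    have ppos: "\<forall>a. 0 < pt t a" unfolding pt_def using t by simp
    have lor: "lorz (insert None (Some ` E)) (hs D (i + 1) (pt t))"
      using main_lor[of "i + 1" E] i mat ppos unfolding D_def by auto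
    have e: "i + 1 - 2 = i - 1" by simp
    have qzz: "qf (insert None (Some ` E)) (hs D (i + 1) (pt t)) z z = A t"
      unfolding z_def qf_ind[OF b(1)] A_def hs_def e by simp
    have qzw: "qf (insert None (Some ` E)) (hs D (i + 1) (pt t)) z w = B t"
      unfolding z_def w_def qf_ind[OF b(1)] B_def hs_def e by simp
    have qww: "qf (insert None (Some ` E)) (hs D (i + 1) (pt t)) w w = C t"
      unfolding w_def qf_ind[OF b(1)] C_def hs_def e by simp
    have "0 < A t" unfolding A_def D_def using gp_pos[OF b(4) b(3) ppos] .
    then show ?thesis using lor unfolding lorz_def qzz[symmetric] qzw[symmetric] qww[symmetric] by blast
  qed
  have cont: "isCont (\<lambda>t. (B t)^2 - A t * C t) 0"
    unfolding A_def B_def C_def gp_pt by (intro continuous_intros) auto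
  have "0 \<le> (B 0)^2 - A 0 * C 0"
    using lim_nonneg[OF cont] ineq by (simp add: pt_def)
  then have key: "A 0 * C 0 \<le> (B 0)^2" by simp
  have DE: "D \<subseteq> Pow E" unfolding D_def using b(2) .
  have i1: "1 \<le> i" using i by simp
  have eul: "real d * gp F d (pt 0) = (\<Sum>k\<in>E. gp (mcon F k) (d - 1) (pt 0))"
    if "F \<subseteq> Pow E" "1 \<le> d" for F d
    using euler0[OF b(1) that, of "pt 0"] by (simp add: pt_def)
  have gD: "gp D d (pt 0) = real (fvec Delta d)" for d
    using gp_pt0[OF b(1) DE, of d] unfolding fvec_def D_def by simp
  have A0: "A 0 = real (fvec Delta (i - 1))"
    unfolding A_def gD ..
  have B0: "B 0 = real i * real (fvec Delta i)"
  proof -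
    have "B 0 = real i * gp D i (pt 0)" unfolding B_def using eul[OF DE i1] by simp
    then show ?thesis unfolding gD .
  qed
  have C0: "C 0 = real i * (real (i + 1) * real (fvec Delta (i + 1)))"
  proof -
    have "C 0 = (\<Sum>k\<in>E. real i * gp (mcon D k) i (pt 0))"
      unfolding C_def using eul[OF mcon_sub[OF DE] i1] by simp
    also have "\<dots> = real i * (\<Sum>k\<in>E. gp (mcon D k) (i + 1 - 1) (pt 0))"
      by (simp add: sum_distrib_left)
    also have "\<dots> = real i * (real (i + 1) * gp D (i + 1) (pt 0))"
      using eul[OF DE, of "i + 1"] by simp
    finally show ?thesis unfolding gD .
  qed
  define P where "P = fvec Delta (i - 1) * fvec Delta (i + 1)"
  define F where "F = fvec Delta i"
  have "real (fvec Delta (i - 1)) * (real i * (real (i + 1) * real (fvec Delta (i + 1))))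
      \<le> (real i * real (fvec Delta i))^2"
    using key unfolding A0 B0 C0 .
  then have "real i * (real (i + 1) * real P) \<le> real i * (real i * real F ^ 2)"
    unfolding P_def F_def by (simp add: power2_eq_square mult_ac)
  then have "real (i + 1) * real P \<le> real i * real F ^ 2" using i1 by simp
  then have nat_ineq: "(i + 1) * P \<le> i * F ^ 2"
    by (metis of_nat_le_iff of_nat_mult of_nat_power)
  have "0 < fvec Delta (i - 1)" using fvec_pos[OF mat, of "i - 1"] i by linarith
  moreover have "0 < fvec Delta (i + 1)" using fvec_pos[OF mat] i by simp
  ultimately have P1: "0 < P" unfolding P_def by simp
  show "fvec Delta (i - 1) * fvec Delta (i + 1) < (fvec Delta i)^2"
  proof (rule ccontr)
    assume "\<not> ?thesis"
    then have "F ^ 2 \<le> P" unfolding P_def F_def by simp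
    then have "i * F ^ 2 \<le> i * P" by simp
    then have "(i + 1) * P \<le> i * P" using nat_ineq by linarith
    then show False using P1 by simp
  qed
qed

end
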